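(* Let $I'(i,j)$, for $1\le i\le j\le n$, be the smallest index $k\in[i,j]$ such that $d_P(v_i,v_k)\ge |v_iv_j|+d_P(v_k,v_j)$. Then (1) $I'(i,j)\le I'(i,j+1)$ for all $1\le i\le j\le n-1$; and (2) $I'(i,j)\le I'(i+1,j)$ for all $1\le i\le j-1$, $j\le n$.
   Context: Let $v_1,\dots,v_n$ be points of a metric space with metric $|\cdot|$ (symmetric, nonnegative, $|v_iv_j|=0$ iff $i=j$, triangle inequality). For $i\le j$ let $d_P(v_i,v_j)=\sum_{k=i}^{j-1}|v_kv_{k+1}|$ and $d_P(v_j,v_i)=d_P(v_i,v_j)$. Note $I'(i,j)$ is well defined since $d_P(v_i,v_j)\ge|v_iv_j|$. *)

theory Defs
  imports Complex_Main
begin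

definition dP :: "(nat \<Rightarrow> 'a::metric_space) \<Rightarrow> nat \<Rightarrow> nat \<Rightarrow> real" where
  "dP v i j = (\<Sum>k \<in> {min i j..<max i j}. dist (v k) (v (Suc k)))"

definition Iprime :: "(nat \<Rightarrow> 'a::metric_space) \<Rightarrow> nat \<Rightarrow> nat \<Rightarrow> nat" where
  "Iprime v i j = (LEAST k. i \<le> k \<and> k \<le> j \<and> dP v i k \<ge> dist (v i) (v j) + dP v k j)"

end

theory Submission
  imports Defs
begin

lemma dP_le: "i \<le> j \<Longrightarrow> dP v i j = (\<Sum>k\<in>{i..<j}. dist (v k) (v (Suc k)))"
  by (simp add: dP_def)

lemma dP_refl: "dP v j j = 0"
  by (simp add: dP_def)

lemma dP_Suc: "i \<le> j \<Longrightarrow> dP v i (Suc j) = dP v i j + dist (v j) (v (Suc j))"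
  by (simp add: dP_le)

lemma dP_Suc_left: "i < k \<Longrightarrow> dP v i k = dist (v i) (v (Suc i)) + dP v (Suc i) k"
  by (simp add: dP_le sum.atLeast_Suc_lessThan)

lemma dist_le_dP: "i \<le> j \<Longrightarrow> dist (v i) (v j) \<le> dP v i j"
proof (induction j)
  case 0 then show ?case by (simp add: dP_refl)
next
  case (Suc j)
  show ?case
  proof (cases "i = Suc j")
    case True then show ?thesis by (simp add: dP_refl)
  next
    case False
    then have "i \<le> j" using Suc.prems by simp
    then have "dist (v i) (v (Suc j)) \<le> dist (v i) (v j) + dist (v j) (v (Suc j))"
      by (simp add: dist_triangle)
    also have "\<dots> \<le> dP v i (Suc j)" using Suc.IH \<open>i \<le> j\<close> dP_Suc[of i j v] by simp
    finally show ?thesis .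
  qed
qed

lemma Iprime_prop:
  assumes "i \<le> j"
  shows "i \<le> Iprime v i j \<and> Iprime v i j \<le> j \<and>
     dP v i (Iprime v i j) \<ge> dist (v i) (v j) + dP v (Iprime v i j) j"
  unfolding Iprime_def
  by (rule LeastI[of _ j]) (use assms dist_le_dP[OF assms, of v] in \<open>simp add: dP_refl\<close>)

lemma Iprime_least:
  assumes "i \<le> k" "k \<le> j" "dP v i k \<ge> dist (v i) (v j) + dP v k j"
  shows "Iprime v i j \<le> k"
  unfolding Iprime_def by (rule Least_le) (use assms in simp)

theorem lemma3:
  fixes v :: "nat \<Rightarrow> 'a::metric_space" and n :: nat
  assumes distinct: "inj_on v {1..n}"
  shows "(\<forall>i j. 1 \<le> i \<and> i \<le> j \<and> j \<le> n - 1 \<longrightarrow> Iprime v i j \<le> Iprime v i (j + 1))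
       \<and> (\<forall>i j. 1 \<le> i \<and> i \<le> j - 1 \<and> j \<le> n \<longrightarrow> Iprime v i j \<le> Iprime v (i + 1) j)"
proof (intro conjI allI impI)
  fix i j assume h: "1 \<le> i \<and> i \<le> j \<and> j \<le> n - 1"
  then have ij: "i \<le> j" by simp
  define k where "k = Iprime v i (Suc j)"
  have kp: "i \<le> k" "k \<le> Suc j" "dP v i k \<ge> dist (v i) (v (Suc j)) + dP v k (Suc j)"
    using Iprime_prop[of i "Suc j" v] ij unfolding k_def by auto
  show "Iprime v i j \<le> Iprime v i (j + 1)"
  proof (cases "k = Suc j")
    case True
    then show ?thesis using Iprime_prop[OF ij, of v] k_def by simp
  next
    case False
    then have kj: "k \<le> j" using kp by simp
    have "dist (v i) (v j) \<le> dist (v i) (v (Suc j)) + dist (v j) (v (Suc j))"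
      by (metis dist_commute dist_triangle)
    then have "dP v i k \<ge> dist (v i) (v j) + dP v k j"
      using kp(3) dP_Suc[OF kj, of v] by simp
    then show ?thesis using Iprime_least[OF kp(1) kj] k_def by simp
  qed
next
  fix i j assume h: "1 \<le> i \<and> i \<le> j - 1 \<and> j \<le> n"
  then have ij: "i < j" by linarith
  define k where "k = Iprime v (Suc i) j"
  have kp: "Suc i \<le> k" "k \<le> j" "dP v (Suc i) k \<ge> dist (v (Suc i)) (v j) + dP v k j"
    using Iprime_prop[of "Suc i" j v] ij unfolding k_def by auto
  have "dist (v i) (v j) \<le> dist (v i) (v (Suc i)) + dist (v (Suc i)) (v j)"
    by (rule dist_triangle)
  then have "dP v i k \<ge> dist (v i) (v j) + dP v k j"
    using kp(3) dP_Suc_left[of i k v] kp(1) by simp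
  then show "Iprime v i j \<le> Iprime v (i + 1) j"
    using Iprime_least[of i k j v] kp k_def by simp
qed

end
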